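(* Let $X \subset \mathbb{R}^d$ be a closed set and let $\mu$ be an admissible, $X$-indeterminate measure. If $w$ is a polynomial which is non-negative on $X$ and has only finitely many zeros on $X$, then the measure $w\mu$ is admissible and $X$-indeterminate.
   Context: An admissible measure on a closed set $X \subseteq \mathbb{R}^d$ is a positive Radon measure supported on $X$ with all polynomials integrable. $\mu$ is $X$-indeterminate if some admissible measure on $X$ distinct from $\mu$ has the same integrals against all polynomials. *)

theory Defs
  imports "HOL-Analysis.Analysis"
begin

text \<open>Admissible measure on a closed set X of R^d: a (positive) Radon measure on the Borel
  sets of R^d (locally finite Borel measure), supported on X (X has null complement),
  with every real polynomial integrable.\<close>
definition admissible :: "(real^'n) set \<Rightarrow> (real^'n) measure \<Rightarrow> bool" where
  "admissible X M \<longleftrightarrow>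
     sets M = sets borel \<and>
     (\<forall>K. compact K \<longrightarrow> emeasure M K < \<infinity>) \<and>
     emeasure M (UNIV - X) = 0 \<and>
     (\<forall>p. real_polynomial_function p \<longrightarrow> integrable M p)"

definition X_indeterminate :: "(real^'n) set \<Rightarrow> (real^'n) measure \<Rightarrow> bool" where
  "X_indeterminate X M \<longleftrightarrow>
     (\<exists>N. admissible X N \<and> N \<noteq> M \<and>
          (\<forall>p. real_polynomial_function p \<longrightarrow>
                 integral\<^sup>L N p = integral\<^sup>L M p))"

end

theory Submission
  imports Defs
begin

lemma poly_meas:
  assumes "sets M = sets (borel :: (real^'n) measure)" "real_polynomial_function (p :: real^'n \<Rightarrow> real)"
  shows "p \<in> borel_measurable M"
proof -
  have "continuous_on UNIV p"
    using assms(2) by (simp add: continuous_on_polymonial_function real_polynomial_function_eq)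
  then have "p \<in> borel_measurable borel"
    using borel_measurable_continuous_onI by blast
  then show ?thesis using measurable_cong_sets[OF assms(1), of borel borel] by metis
qed

lemma adm_AE:
  assumes "admissible X M" "closed X"
  shows "AE x in M. x \<in> X"
proof -
  have s: "sets M = sets borel" and n: "emeasure M (UNIV - X) = 0"
    using assms by (auto simp: admissible_def)
  have sp: "space M = UNIV" using sets_eq_imp_space_eq[OF s] by simp
  have m: "UNIV - X \<in> sets M" using s assms(2) by auto
  show ?thesis
    by (rule AE_I'[of "UNIV - X"]) (use m n sp in auto)
qed

lemma adm_density:
  fixes X :: "(real^'n) set" and M :: "(real^'n) measure" and w :: "real^'n \<Rightarrow> real"
  assumes "closed X" "admissible X M" "real_polynomial_function w" "\<forall>x\<in>X. w x \<ge> 0"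
  shows "admissible X (density M (\<lambda>x. ennreal (w x)))"
proof -
  have s: "sets M = sets borel" and n: "emeasure M (UNIV - X) = 0"
    and ip: "\<And>p. real_polynomial_function p \<Longrightarrow> integrable M p"
    using assms by (auto simp: admissible_def)
  have sp: "space M = UNIV" using sets_eq_imp_space_eq[OF s] by simp
  have wm[measurable]: "w \<in> borel_measurable M" using poly_meas[OF s assms(3)] .
  have AEX: "AE x in M. x \<in> X" using adm_AE assms(1,2) by blast
  have AEw: "AE x in M. 0 \<le> w x" using AEX assms(4) by auto
  have wint: "integrable M w" using ip assms(3) by blast
  have fin: "emeasure (density M (\<lambda>x. ennreal (w x))) K < \<infinity>" if "K \<in> sets M" for K
  proof -
    have "emeasure (density M (\<lambda>x. ennreal (w x))) K = (\<integral>\<^sup>+ x. ennreal (w x) * indicator K x \<partial>M)"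
      using that by (simp add: emeasure_density)
    also have "\<dots> \<le> (\<integral>\<^sup>+ x. ennreal (norm (w x)) \<partial>M)"
      by (intro nn_integral_mono) (auto simp: indicator_def intro: ennreal_leI)
    also have "\<dots> < \<infinity>" using wint by (simp add: integrable_iff_bounded)
    finally show ?thesis .
  qed
  have "sets (density M (\<lambda>x. ennreal (w x))) = sets borel" using s by simp
  moreover have "\<forall>K. compact K \<longrightarrow> emeasure (density M (\<lambda>x. ennreal (w x))) K < \<infinity>"
    using fin s by (auto intro: borel_compact)
  moreover have "emeasure (density M (\<lambda>x. ennreal (w x))) (UNIV - X) = 0"
  proof -
    have m: "UNIV - X \<in> sets M" using s assms(1) by auto
    have "emeasure (density M (\<lambda>x. ennreal (w x))) (UNIV - X)
        = (\<integral>\<^sup>+ x. ennreal (w x) * indicator (UNIV - X) x \<partial>M)"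
      using m by (simp add: emeasure_density)
    also have "\<dots> = (\<integral>\<^sup>+ x. 0 \<partial>M)"
      by (rule nn_integral_cong_AE) (use AEX in auto)
    finally show ?thesis by simp
  qed
  moreover have "integrable (density M (\<lambda>x. ennreal (w x))) p" if "real_polynomial_function p" for p
  proof -
    have [measurable]: "p \<in> borel_measurable M" using poly_meas[OF s that] .
    have "integrable M (\<lambda>x. w x *\<^sub>R p x)"
      using ip[of "\<lambda>x. w x * p x"] that assms(3) by auto
    then show ?thesis by (subst integrable_density) (use AEw in auto)
  qed
  ultimately show ?thesis by (auto simp: admissible_def)
qed

lemma int_decomp:
  fixes X :: "(real^'n) set" and M :: "(real^'n) measure" and w p :: "real^'n \<Rightarrow> real"
  assumes "closed X" "admissible X M" "real_polynomial_function w" "\<forall>x\<in>X. w x \<ge> 0"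
    "real_polynomial_function p" "finite {x\<in>X. w x = 0}"
  shows "integral\<^sup>L M p = integral\<^sup>L (density M (\<lambda>x. ennreal (indicator {x. 0 < w x} x))) p
           + (\<Sum>z\<in>{x\<in>X. w x = 0}. p z * measure M {z})"
proof -
  define S where "S = {x. 0 < w x}"
  define Z where "Z = {x\<in>X. w x = 0}"
  have s: "sets M = sets borel"
    and ip: "\<And>p. real_polynomial_function p \<Longrightarrow> integrable M p"
    using assms by (auto simp: admissible_def)
  have sp: "space M = UNIV" using sets_eq_imp_space_eq[OF s] by simp
  have wm[measurable]: "w \<in> borel_measurable M" using poly_meas[OF s assms(3)] .
  have pm[measurable]: "p \<in> borel_measurable M" using poly_meas[OF s assms(5)] .
  have Sm[measurable]: "S \<in> sets M"
  proof -
    have "{x\<in>space M. 0 < w x} \<in> sets M" by measurable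
    then show ?thesis using sp by (simp add: S_def)
  qed
  have singm[measurable]: "{z} \<in> sets M" for z using s by simp
  have AEX: "AE x in M. x \<in> X" using adm_AE assms(1,2) by blast
  have AE1: "AE x in M. p x = indicator S x * p x + (\<Sum>z\<in>Z. indicator {z} x * p z)"
    using AEX
  proof eventually_elim
    case (elim x)
    have e: "(\<Sum>z\<in>Z. indicator {z} x * p z) = (\<Sum>z\<in>Z. if z = x then p x else 0)"
      by (rule sum.cong) (auto simp: indicator_def)
    show ?case
    proof (cases "0 < w x")
      case True
      then have "x \<notin> Z" by (auto simp: Z_def)
      then show ?thesis using True e by (auto simp: S_def intro!: sum.neutral)
    next
      case False
      then have "x \<in> Z" using elim assms(4) by (auto simp: Z_def)
      then show ?thesis using False e assms(6) by (simp add: S_def Z_def)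
    qed
  qed
  have i1: "integrable M (\<lambda>x. indicator S x * p x)"
    using integrable_real_mult_indicator[OF Sm ip[OF assms(5)]] by (simp add: mult_ac)
  have i2: "integrable M (\<lambda>x. indicator {z} x * p z)" for z
  proof -
    have "integrable M (\<lambda>_. p z)" using ip[of "\<lambda>_. p z"] by auto
    from integrable_real_mult_indicator[OF singm this] show ?thesis by (simp add: mult_ac)
  qed
  have "integral\<^sup>L M p = integral\<^sup>L M (\<lambda>x. indicator S x * p x + (\<Sum>z\<in>Z. indicator {z} x * p z))"
    by (rule integral_cong_AE) (use AE1 in auto)
  also have "\<dots> = integral\<^sup>L M (\<lambda>x. indicator S x * p x) + (\<Sum>z\<in>Z. integral\<^sup>L M (\<lambda>x. indicator {z} x * p z))"
    using i1 i2 by (simp add: integral_add integral_sum)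
  also have "(\<Sum>z\<in>Z. integral\<^sup>L M (\<lambda>x. indicator {z} x * p z)) = (\<Sum>z\<in>Z. p z * measure M {z})"
  proof (rule sum.cong)
    fix z
    have "integral\<^sup>L M (\<lambda>x. indicator {z} x * p z) = integral\<^sup>L M (indicator {z}) * p z"
      by (rule integral_mult_left_zero)
    then show "integral\<^sup>L M (\<lambda>x. indicator {z} x * p z) = p z * measure M {z}"
      using sp by simp
  qed simp
  also have "integral\<^sup>L M (\<lambda>x. indicator S x * p x)
      = integral\<^sup>L (density M (\<lambda>x. ennreal (indicator S x))) p"
    by (subst integral_density) auto
  finally show ?thesis by (simp add: S_def Z_def)
qed

lemma meas_decomp:
  fixes X :: "(real^'n) set" and M :: "(real^'n) measure" and w :: "real^'n \<Rightarrow> real"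
  assumes "closed X" "admissible X M" "real_polynomial_function w" "\<forall>x\<in>X. w x \<ge> 0"
    "finite {x\<in>X. w x = 0}" "A \<in> sets M"
  shows "emeasure M A = emeasure (density M (\<lambda>x. ennreal (indicator {x. 0 < w x} x))) A
           + (\<Sum>z\<in>{x\<in>X. w x = 0} \<inter> A. emeasure M {z})"
proof -
  define S where "S = {x. 0 < w x}"
  define Z where "Z = {x\<in>X. w x = 0}"
  have s: "sets M = sets borel"
    using assms by (auto simp: admissible_def)
  have sp: "space M = UNIV" using sets_eq_imp_space_eq[OF s] by simp
  have wm[measurable]: "w \<in> borel_measurable M" using poly_meas[OF s assms(3)] .
  have Sm[measurable]: "S \<in> sets M"
  proof -
    have "{x\<in>space M. 0 < w x} \<in> sets M" by measurable
    then show ?thesis using sp by (simp add: S_def)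
  qed
  have Am[measurable]: "A \<in> sets M" by fact
  have fZ: "finite (Z \<inter> A)" using assms(5) by (simp add: Z_def)
  have ZAm: "Z \<inter> A \<in> sets M" using s fZ by (simp add: finite_imp_closed)
  have singm: "{z} \<in> sets M" for z using s by simp
  have AEX: "AE x in M. x \<in> X" using adm_AE assms(1,2) by blast
  have d: "emeasure (density M (\<lambda>x. ennreal (indicator S x))) A = emeasure M (S \<inter> A)"
  proof -
    have "emeasure (density M (\<lambda>x. ennreal (indicator S x))) A
        = (\<integral>\<^sup>+ x. ennreal (indicator S x) * indicator A x \<partial>M)"
      by (simp add: emeasure_density)
    also have "\<dots> = (\<integral>\<^sup>+ x. indicator (S \<inter> A) x \<partial>M)"
      by (rule nn_integral_cong) (auto simp: indicator_def)
    also have "\<dots> = emeasure M (S \<inter> A)" by simp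
    finally show ?thesis .
  qed
  have "emeasure M A = emeasure M (S \<inter> A) + emeasure M (A - S)"
    by (subst plus_emeasure) (auto intro!: arg_cong[where f="emeasure M"])
  also have "emeasure M (A - S) = emeasure M (Z \<inter> A)"
  proof (rule emeasure_eq_AE)
    show "AE x in M. (x \<in> A - S) = (x \<in> Z \<inter> A)"
      using AEX by eventually_elim (use assms(4) in \<open>force simp: S_def Z_def\<close>)
  qed (use ZAm in auto)
  also have "\<dots> = (\<Sum>z\<in>Z \<inter> A. emeasure M {z})"
    by (rule emeasure_eq_sum_singleton) (use fZ singm in auto)
  finally show ?thesis using d by (simp add: S_def Z_def)
qed

lemma lagrange:
  fixes Z :: "(real^'n) set"
  assumes "finite Z" "z0 \<in> Z"
  shows "\<exists>q. real_polynomial_function q \<and> q z0 = 1 \<and> (\<forall>z\<in>Z-{z0}. q z = 0)"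
proof -
  define q where "q x = (\<Prod>z\<in>Z-{z0}. ((x - z) \<bullet> (z0 - z)) / ((z0 - z) \<bullet> (z0 - z)))" for x
  have lin: "real_polynomial_function (\<lambda>x. (x - z) \<bullet> c)" for z c :: "real^'n"
  proof -
    have "real_polynomial_function (\<lambda>x. x \<bullet> c - z \<bullet> c)"
      by (intro real_polynomial_function_diff real_polynomial_function.intros(1,2)
          bounded_linear_inner_left)
    then show ?thesis by (simp add: inner_diff_left)
  qed
  have "real_polynomial_function q"
    unfolding q_def by (intro real_polynomial_function_prod real_polynomial_function_divide lin) (use assms in auto)
  moreover have "q z0 = 1"
    unfolding q_def by (rule prod.neutral) auto
  moreover have "q z = 0" if "z \<in> Z-{z0}" for z
    unfolding q_def using that assms(1) by (intro prod_zero) (auto intro!: bexI[of _ z])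
  ultimately show ?thesis by blast
qed

lemma density_S:
  fixes M :: "(real^'n) measure" and w :: "real^'n \<Rightarrow> real"
  assumes "sets M = sets borel" "real_polynomial_function w"
  shows "density (density M (\<lambda>x. ennreal (w x))) (\<lambda>x. ennreal (indicator {x. 0 < w x} x / w x))
       = density M (\<lambda>x. ennreal (indicator {x. 0 < w x} x))"
proof -
  have wm[measurable]: "w \<in> borel_measurable M" using poly_meas[OF assms] .
  have "density (density M (\<lambda>x. ennreal (w x))) (\<lambda>x. ennreal (indicator {x. 0 < w x} x / w x))
      = density M (\<lambda>x. ennreal (w x) * ennreal (indicator {x. 0 < w x} x / w x))"
    by (rule density_density_eq) auto
  also have "(\<lambda>x. ennreal (w x) * ennreal (indicator {x. 0 < w x} x / w x))
      = (\<lambda>x. ennreal (indicator {x. 0 < w x} x))"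
  proof
    fix x show "ennreal (w x) * ennreal (indicator {x. 0 < w x} x / w x) = ennreal (indicator {x. 0 < w x} x)"
    proof (cases "0 < w x")
      case True
      then show ?thesis by (simp add: ennreal_mult[symmetric])
    next
      case False
      then show ?thesis by simp
    qed
  qed
  finally show ?thesis .
qed

theorem proposition5p2:
  fixes X :: "(real^'n) set" and \<mu> :: "(real^'n) measure" and w :: "real^'n \<Rightarrow> real"
  assumes "closed X"
    and "admissible X \<mu>"
    and "X_indeterminate X \<mu>"
    and "real_polynomial_function w"
    and "\<forall>x\<in>X. w x \<ge> 0"
    and "finite {x\<in>X. w x = 0}"
  shows "admissible X (density \<mu> (\<lambda>x. ennreal (w x))) \<and>
         X_indeterminate X (density \<mu> (\<lambda>x. ennreal (w x)))"
proof -
  define S where "S = {x. 0 < w x}"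
  define Z where "Z = {x\<in>X. w x = 0}"
  have A1: "admissible X (density \<mu> (\<lambda>x. ennreal (w x)))"
    using adm_density assms by blast
  obtain N where N: "admissible X N" "N \<noteq> \<mu>"
    and mom: "\<And>p. real_polynomial_function p \<Longrightarrow> integral\<^sup>L N p = integral\<^sup>L \<mu> p"
    using assms(3) unfolding X_indeterminate_def by blast
  have A2: "admissible X (density N (\<lambda>x. ennreal (w x)))"
    using adm_density assms N(1) by blast
  have sN: "sets N = sets borel" and s\<mu>: "sets \<mu> = sets borel"
    using N(1) assms(2) by (auto simp: admissible_def)
  have intw: "integral\<^sup>L (density M (\<lambda>x. ennreal (w x))) p = integral\<^sup>L M (\<lambda>x. w x * p x)"
    if "admissible X M" "real_polynomial_function p" for M p
  proof -
    have s: "sets M = sets borel" using that by (auto simp: admissible_def)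
    have [measurable]: "w \<in> borel_measurable M" "p \<in> borel_measurable M"
      using poly_meas[OF s] assms(4) that(2) by auto
    have "AE x in M. 0 \<le> w x" using adm_AE[OF that(1) assms(1)] assms(5) by auto
    then show ?thesis by (subst integral_density) auto
  qed
  have mom2: "integral\<^sup>L (density N (\<lambda>x. ennreal (w x))) p = integral\<^sup>L (density \<mu> (\<lambda>x. ennreal (w x))) p"
    if "real_polynomial_function p" for p
    using intw[OF N(1) that] intw[OF assms(2) that] mom[of "\<lambda>x. w x * p x"] that assms(4) by auto
  have neq: "density N (\<lambda>x. ennreal (w x)) \<noteq> density \<mu> (\<lambda>x. ennreal (w x))"
  proof
    assume eq: "density N (\<lambda>x. ennreal (w x)) = density \<mu> (\<lambda>x. ennreal (w x))"
    have dS: "density N (\<lambda>x. ennreal (indicator S x)) = density \<mu> (\<lambda>x. ennreal (indicator S x))"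
      using density_S[OF sN assms(4)] density_S[OF s\<mu> assms(4)] eq by (simp add: S_def)
    have pt: "measure N {z0} = measure \<mu> {z0}" if z0: "z0 \<in> Z" for z0
    proof -
      obtain q where q: "real_polynomial_function q" "q z0 = 1" "\<forall>z\<in>Z-{z0}. q z = 0"
        using lagrange[OF _ z0] assms(6) Z_def by blast
      have sumr: "(\<Sum>z\<in>Z. q z * measure M {z}) = measure M {z0}" for M :: "(real^'n) measure"
      proof -
        have "(\<Sum>z\<in>Z. q z * measure M {z}) = q z0 * measure M {z0} + (\<Sum>z\<in>Z-{z0}. q z * measure M {z})"
          using z0 assms(6) by (simp add: Z_def sum.remove)
        also have "(\<Sum>z\<in>Z-{z0}. q z * measure M {z}) = 0" using q(3) by simp
        finally show ?thesis using q(2) by simp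
      qed
      have "integral\<^sup>L N q = integral\<^sup>L \<mu> q" using mom q(1) by blast
      then show ?thesis
        using int_decomp[OF assms(1) N(1) assms(4,5) q(1) assms(6)]
          int_decomp[OF assms(1) assms(2) assms(4,5) q(1) assms(6)] dS sumr
        by (simp add: S_def Z_def)
    qed
    have fin: "emeasure M {z} \<noteq> top" if "admissible X M" for M :: "(real^'n) measure" and z
    proof -
      have "emeasure M {z} < \<infinity>" using that compact_sing[of z] unfolding admissible_def by blast
      then show ?thesis by simp
    qed
    have "N = \<mu>"
    proof (rule measure_eqI)
      show "sets N = sets \<mu>" using sN s\<mu> by simp
      fix A assume A: "A \<in> sets N"
      then have A': "A \<in> sets \<mu>" using sN s\<mu> by simp
      have "(\<Sum>z\<in>Z \<inter> A. emeasure N {z}) = (\<Sum>z\<in>Z \<inter> A. emeasure \<mu> {z})"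
      proof (rule sum.cong)
        fix z assume "z \<in> Z \<inter> A"
        then show "emeasure N {z} = emeasure \<mu> {z}"
          using pt[of z] emeasure_eq_ennreal_measure[OF fin[OF N(1)]]
            emeasure_eq_ennreal_measure[OF fin[OF assms(2)]] by simp
      qed simp
      then show "emeasure N A = emeasure \<mu> A"
        using meas_decomp[OF assms(1) N(1) assms(4,5,6) A]
          meas_decomp[OF assms(1) assms(2) assms(4,5,6) A'] dS
        by (simp add: S_def Z_def)
    qed
    then show False using N(2) by simp
  qed
  have "X_indeterminate X (density \<mu> (\<lambda>x. ennreal (w x)))"
    unfolding X_indeterminate_def using A2 neq mom2 by blast
  then show ?thesis using A1 by simp
qed

end
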